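(* Let $M\subseteq V$, let $SB^\ast$ be a minimum satellite bridge for $M$, and let $C\subseteq V_S$ be a set of satellite nodes each of which is adjacent in $\widetilde G$ to at least one vertex of $M$. Then there is a tree in $\widetilde G_s$ whose vertex set contains $N(SB^\ast)\cup C$ and which has at most $|N(SB^\ast)|+3|C|-1$ edges. Consequently, every minimum Steiner tree $ST^\ast$ of $C$ in $\widetilde G_s$ (a tree in $\widetilde G_s$ containing $C$ with the minimum number of edges) satisfies $|E(ST^\ast)|\le |N(SB^\ast)|+3|C|-1$.
   Context: Let $G=(V,E)$ be a finite, simple, undirected, connected graph with $|V|\ge 2$. Fix a positive integer $K$ and, for every $u\in V$, a nonempty set $\Gamma(u)\subseteq\{1,\dots,K\}$. Let $nb_G(u)$ be the neighbours of $u$ in $G$. For a tree $T$, $N(T)$ and $E(T)$ are its vertex and edge sets. The extended graph $\widetilde G=(\widetilde V,\widetilde E)$ of $G$: (i) initially $\widetilde V=V$, $\widetilde E=\emptyset$; (ii) for each $u\in V$ and each $i\in\bigcup_{v\in nb_G(u)}\Gamma(v)$, add a new vertex $\lambda(u,i)$ (satellite node of $u$; $u$ is its nuclear node); $\Psi(u)$ is the set of satellite nodes of $u$; (iii) for each $u\in V$, join every pair of distinct vertices of $\Psi(u)\cup\{u\}$; (iv) for each edge $\{u,v\}\in E$ (in each orientation $(u,v)$), each $i\in\Gamma(v)$, $j\in\Gamma(u)$, add edges $\{\lambda(u,i),\lambda(v,j)\}$, $\{\lambda(u,i),v\}$, $\{u,\lambda(v,j)\}$. $V_S=\widetilde V\setminus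 V$ is the set of satellite nodes, and $\widetilde G_s$ is the subgraph of $\widetilde G$ induced by $V_S$. Given $M\subseteq V$, a satellite bridge is a (nonempty) subtree $SB$ of $\widetilde G$ all of whose vertices are satellite nodes and such that every vertex of $M$ is adjacent in $\widetilde G$ to at least one vertex of $SB$. A minimum satellite bridge $SB^\ast$ is a satellite bridge with the minimum number of vertices. *)

theory Defs
  imports Main
begin

text \<open>Vertices of the extended graph: nuclear nodes (original vertices) and
  satellite nodes lambda(u,i).\<close>
datatype 'v xnode = Nuc 'v | Sat 'v nat

definition adj_rel :: "'a set set \<Rightarrow> ('a \<times> 'a) set" where
  "adj_rel T = {(x, y). {x, y} \<in> T}"

definition simple_graph :: "'a set \<Rightarrow> 'a set set \<Rightarrow> bool" where
  "simple_graph N T \<longleftrightarrow> finite N \<and>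
     (\<forall>e\<in>T. \<exists>u v. e = {u, v} \<and> u \<noteq> v \<and> u \<in> N \<and> v \<in> N)"

definition connected_graph :: "'a set \<Rightarrow> 'a set set \<Rightarrow> bool" where
  "connected_graph N T \<longleftrightarrow> (\<forall>x\<in>N. \<forall>y\<in>N. (x, y) \<in> (adj_rel T \<inter> (N \<times> N))\<^sup>*)"

definition has_cycle :: "'a set set \<Rightarrow> bool" where
  "has_cycle T \<longleftrightarrow> (\<exists>xs. length xs \<ge> 3 \<and> distinct xs \<and>
      (\<forall>i. Suc i < length xs \<longrightarrow> {xs ! i, xs ! Suc i} \<in> T) \<and> {last xs, hd xs} \<in> T)"

definition is_tree :: "'a set \<Rightarrow> 'a set set \<Rightarrow> bool" where
  "is_tree N T \<longleftrightarrow> N \<noteq> {} \<and> simple_graph N T \<and> connected_graph N T \<and> \<not> has_cycle T"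

definition nb :: "'v set set \<Rightarrow> 'v \<Rightarrow> 'v set" where
  "nb E u = {v. {u, v} \<in> E}"

definition Psi :: "'v set set \<Rightarrow> ('v \<Rightarrow> nat set) \<Rightarrow> 'v \<Rightarrow> 'v xnode set" where
  "Psi E \<Gamma> u = {Sat u i | i. i \<in> (\<Union>v\<in>nb E u. \<Gamma> v)}"

definition sat_nodes :: "'v set \<Rightarrow> 'v set set \<Rightarrow> ('v \<Rightarrow> nat set) \<Rightarrow> 'v xnode set" where
  "sat_nodes V E \<Gamma> = (\<Union>u\<in>V. Psi E \<Gamma> u)"

definition ext_vertices :: "'v set \<Rightarrow> 'v set set \<Rightarrow> ('v \<Rightarrow> nat set) \<Rightarrow> 'v xnode set" where
  "ext_vertices V E \<Gamma> = Nuc ` V \<union> sat_nodes V E \<Gamma>"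

definition ext_edges :: "'v set \<Rightarrow> 'v set set \<Rightarrow> ('v \<Rightarrow> nat set) \<Rightarrow> 'v xnode set set" where
  "ext_edges V E \<Gamma> =
     {{x, y} | x y. x \<noteq> y \<and> (\<exists>u\<in>V. x \<in> insert (Nuc u) (Psi E \<Gamma> u) \<and> y \<in> insert (Nuc u) (Psi E \<Gamma> u))}
   \<union> {{Sat u i, Sat v j} | u v i j. {u, v} \<in> E \<and> i \<in> \<Gamma> v \<and> j \<in> \<Gamma> u}
   \<union> {{Sat u i, Nuc v} | u v i. {u, v} \<in> E \<and> i \<in> \<Gamma> v}
   \<union> {{Nuc u, Sat v j} | u v j. {u, v} \<in> E \<and> j \<in> \<Gamma> u}"

definition ext_subtree :: "'v set \<Rightarrow> 'v set set \<Rightarrow> ('v \<Rightarrow> nat set) \<Rightarrow> 'v xnode set \<Rightarrow> 'v xnode set set \<Rightarrow> bool" where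
  "ext_subtree V E \<Gamma> N T \<longleftrightarrow> is_tree N T \<and> N \<subseteq> ext_vertices V E \<Gamma> \<and> T \<subseteq> ext_edges V E \<Gamma>"

definition sat_tree :: "'v set \<Rightarrow> 'v set set \<Rightarrow> ('v \<Rightarrow> nat set) \<Rightarrow> 'v xnode set \<Rightarrow> 'v xnode set set \<Rightarrow> bool" where
  "sat_tree V E \<Gamma> N T \<longleftrightarrow> is_tree N T \<and> N \<subseteq> sat_nodes V E \<Gamma> \<and> T \<subseteq> ext_edges V E \<Gamma>"

definition satellite_bridge ::
  "'v set \<Rightarrow> 'v set set \<Rightarrow> ('v \<Rightarrow> nat set) \<Rightarrow> 'v set \<Rightarrow> 'v xnode set \<Rightarrow> 'v xnode set set \<Rightarrow> bool" where
  "satellite_bridge V E \<Gamma> M N T \<longleftrightarrow> ext_subtree V E \<Gamma> N T \<and> N \<subseteq> sat_nodes V E \<Gamma> \<and>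
     (\<forall>m\<in>M. \<exists>x\<in>N. {Nuc m, x} \<in> ext_edges V E \<Gamma>)"

definition min_satellite_bridge ::
  "'v set \<Rightarrow> 'v set set \<Rightarrow> ('v \<Rightarrow> nat set) \<Rightarrow> 'v set \<Rightarrow> 'v xnode set \<Rightarrow> 'v xnode set set \<Rightarrow> bool" where
  "min_satellite_bridge V E \<Gamma> M N T \<longleftrightarrow> satellite_bridge V E \<Gamma> M N T \<and>
     (\<forall>N' T'. satellite_bridge V E \<Gamma> M N' T' \<longrightarrow> card N \<le> card N')"

definition min_steiner_tree ::
  "'v set \<Rightarrow> 'v set set \<Rightarrow> ('v \<Rightarrow> nat set) \<Rightarrow> 'v xnode set \<Rightarrow> 'v xnode set \<Rightarrow> 'v xnode set set \<Rightarrow> bool" where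
  "min_steiner_tree V E \<Gamma> C N T \<longleftrightarrow> sat_tree V E \<Gamma> N T \<and> C \<subseteq> N \<and>
     (\<forall>N' T'. sat_tree V E \<Gamma> N' T' \<and> C \<subseteq> N' \<longrightarrow> card T \<le> card T')"

end

theory Submission imports Defs begin

lemma exit_edge:
  assumes "(x,y) \<in> R\<^sup>*" "x \<in> S" "y \<notin> S"
  shows "\<exists>a b. (a,b) \<in> R \<and> a \<in> S \<and> b \<notin> S"
  using assms by (induction rule: rtrancl_induct) blast+

lemma tree_D: assumes "is_tree N T"
  shows "N \<noteq> {}" "simple_graph N T" "connected_graph N T" "\<not> has_cycle T"
  using assms unfolding is_tree_def by simp_all

lemma tree_I: "N \<noteq> {} \<Longrightarrow> simple_graph N T \<Longrightarrow> connected_graph N T \<Longrightarrow> \<not> has_cycle T \<Longrightarrow> is_tree N T"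
  unfolding is_tree_def by simp

lemma sg_sub: "simple_graph S T \<Longrightarrow> e \<in> T \<Longrightarrow> e \<subseteq> S"
  unfolding simple_graph_def by auto

lemma sg_fin: "simple_graph S T \<Longrightarrow> finite S"
  unfolding simple_graph_def by simp

lemma tree_edges_sub: "is_tree S T \<Longrightarrow> e \<in> T \<Longrightarrow> e \<subseteq> S"
  using tree_D(2) sg_sub by blast

lemma tree_fin_edges: "is_tree S T \<Longrightarrow> finite T"
proof -
  assume t: "is_tree S T"
  hence "T \<subseteq> Pow S" using tree_edges_sub by blast
  moreover have "finite S" using t tree_D(2) sg_fin by blast
  ultimately show ?thesis by (meson finite_Pow_iff finite_subset)
qed

lemma leaf_tree:
  assumes t: "is_tree S T" and b: "b \<notin> S" and a: "a \<in> S"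
  shows "is_tree (insert b S) (insert {a,b} T)"
proof -
  have ab: "a \<noteq> b" using a b by blast
  have sg: "simple_graph (insert b S) (insert {a,b} T)"
    using tree_D(2)[OF t] ab a unfolding simple_graph_def by blast
  let ?R = "adj_rel T \<inter> S \<times> S"
  let ?R' = "adj_rel (insert {a,b} T) \<inter> insert b S \<times> insert b S"
  have sub: "?R \<subseteq> ?R'" unfolding adj_rel_def by blast
  have ba: "(b,a) \<in> ?R'" "(a,b) \<in> ?R'" using a unfolding adj_rel_def by (auto simp: insert_commute)
  have cS: "\<forall>x\<in>S. \<forall>y\<in>S. (x,y) \<in> ?R'\<^sup>*"
    using tree_D(3)[OF t] rtrancl_mono[OF sub] unfolding connected_graph_def by blast
  have con: "connected_graph (insert b S) (insert {a,b} T)"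
    unfolding connected_graph_def
  proof (intro ballI)
    fix x y assume x: "x \<in> insert b S" and y: "y \<in> insert b S"
    have xa: "(x,a) \<in> ?R'\<^sup>*" using x cS a ba by blast
    have ay: "(a,y) \<in> ?R'\<^sup>*" using y cS a ba by blast
    show "(x,y) \<in> ?R'\<^sup>*" using xa ay by (meson rtrancl_trans)
  qed
  have nob: "\<And>y. {b,y} \<in> insert {a,b} T \<Longrightarrow> y = a"
  proof -
    fix y assume h: "{b,y} \<in> insert {a,b} T"
    have "{b,y} \<notin> T" using tree_edges_sub[OF t] b by blast
    hence "{b,y} = {a,b}" using h by blast
    thus "y = a" using ab by (metis doubleton_eq_iff)
  qed
  have nocyc: "\<not> has_cycle (insert {a,b} T)"
  proof
    assume "has_cycle (insert {a,b} T)"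
    then obtain xs where len: "length xs \<ge> 3" and dis: "distinct xs"
      and st: "\<forall>i. Suc i < length xs \<longrightarrow> {xs ! i, xs ! Suc i} \<in> insert {a,b} T"
      and cl: "{last xs, hd xs} \<in> insert {a,b} T" unfolding has_cycle_def by blast
    show False
    proof (cases "b \<in> set xs")
      case False
      have "\<forall>i. Suc i < length xs \<longrightarrow> {xs ! i, xs ! Suc i} \<in> T"
      proof (intro allI impI)
        fix i assume i: "Suc i < length xs"
        have "b \<notin> {xs ! i, xs ! Suc i}" using i False by (auto dest: nth_mem)
        hence "{xs ! i, xs ! Suc i} \<noteq> {a,b}" by blast
        thus "{xs ! i, xs ! Suc i} \<in> T" using st i by blast
      qed
      moreover have "{last xs, hd xs} \<in> T"
      proof -
        have "xs \<noteq> []" using len by auto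
        hence "last xs \<in> set xs" by simp
        moreover have "hd xs \<in> set xs" using \<open>xs \<noteq> []\<close> by simp
        ultimately have "b \<notin> {last xs, hd xs}" using False by auto
        hence "{last xs, hd xs} \<noteq> {a,b}" by blast
        thus ?thesis using cl by blast
      qed
      ultimately have "has_cycle T" using len dis unfolding has_cycle_def by blast
      thus False using tree_D(4)[OF t] by blast
    next
      case True
      then obtain p where p: "p < length xs" "xs ! p = b" by (metis in_set_conv_nth)
      define n where "n = length xs"
      have ne: "xs \<noteq> []" using len by auto
      have lastn: "last xs = xs ! (n - 1)" using ne by (simp add: n_def last_conv_nth)
      have hd0: "hd xs = xs ! 0" using ne by (simp add: hd_conv_nth)
      define q where "q = (if Suc p < n then Suc p else 0)"
      define r where "r = (if p > 0 then p - 1 else n - 1)"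
      have q: "xs ! q = a"
      proof (cases "Suc p < n")
        case True
        then show ?thesis using st p nob unfolding q_def n_def by auto
      next
        case False
        hence "p = n - 1" using p n_def by auto
        then show ?thesis using cl p nob lastn hd0 unfolding q_def by auto
      qed
      have r: "xs ! r = a"
      proof (cases "p > 0")
        case True
        have sp: "Suc (p-1) = p" using True by simp
        hence "{xs ! (p-1), xs ! p} \<in> insert {a,b} T" using st p by metis
        hence "{b, xs ! (p-1)} \<in> insert {a,b} T" using p by (metis insert_commute)
        then show ?thesis using nob True unfolding r_def by auto
      next
        case False
        hence "p = 0" by auto
        then show ?thesis using cl p nob lastn hd0 unfolding r_def by (auto simp: insert_commute)
      qed
      have "q < n" "r < n" using p n_def len unfolding q_def r_def by auto
      hence "q = r" using q r dis n_def by (metis nth_eq_iff_index_eq)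
      moreover have "q \<noteq> r" using p len n_def unfolding q_def r_def by auto
      ultimately show False by blast
    qed
  qed
  show ?thesis using sg con nocyc by (intro tree_I) auto
qed

lemma grow_step:
  assumes fin: "finite N" and con: "connected_graph N T"
    and IH: "S \<subseteq> N" "card S = k" "T' \<subseteq> T" "is_tree S T'" "card T' = k - 1" and k: "k < card N"
  shows "\<exists>S2 T2. S2 \<subseteq> N \<and> card S2 = Suc k \<and> T2 \<subseteq> T \<and> is_tree S2 T2 \<and> card T2 = k"
proof -
  have "S \<noteq> N" using IH(2) k by blast
  then obtain w where w: "w \<in> N" "w \<notin> S" using IH(1) by blast
  obtain s0 where s0: "s0 \<in> S" using tree_D(1)[OF IH(4)] by blast
  have s0N: "s0 \<in> N" using s0 IH(1) by blast
  have "(s0, w) \<in> (adj_rel T \<inter> N \<times> N)\<^sup>*" using con s0N w(1) unfolding connected_graph_def by blast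
  then obtain a b where ab: "(a,b) \<in> adj_rel T \<inter> N \<times> N" "a \<in> S" "b \<notin> S"
    using exit_edge[OF _ s0 w(2)] by blast
  have abT: "{a,b} \<in> T" "b \<in> N" using ab(1) unfolding adj_rel_def by auto
  have tr: "is_tree (insert b S) (insert {a,b} T')" using leaf_tree[OF IH(4) ab(3) ab(2)] .
  have "{a,b} \<notin> T'" using tree_edges_sub[OF IH(4)] ab(3) by blast
  hence c1: "card (insert {a,b} T') = Suc (card T')" using tree_fin_edges[OF IH(4)] by simp
  have k0: "k \<ge> 1" using IH(2) s0 tree_D(2)[OF IH(4)] sg_fin card_gt_0_iff
    by (metis One_nat_def Suc_leI empty_iff)
  have c2: "card (insert {a,b} T') = k" using c1 IH(5) k0 by simp
  have fS: "finite S" using fin IH(1) finite_subset by blast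
  have c3: "card (insert b S) = Suc k" using IH(2) ab(3) fS by simp
  have sub1: "insert b S \<subseteq> N" using IH(1) abT(2) by blast
  have sub2: "insert {a,b} T' \<subseteq> T" using IH(3) abT(1) by blast
  show ?thesis using sub1 sub2 c2 c3 tr by blast
qed

lemma grow:
  assumes fin: "finite N" and con: "connected_graph N T" and s: "s \<in> N"
  shows "1 \<le> k \<Longrightarrow> k \<le> card N \<Longrightarrow> \<exists>S T'. S \<subseteq> N \<and> card S = k \<and> T' \<subseteq> T \<and> is_tree S T' \<and> card T' = k - 1"
proof (induction k)
  case 0 then show ?case by simp
next
  case (Suc k)
  show ?case
  proof (cases "k = 0")
    case True
    have t: "is_tree {s} {}" by (rule tree_I) (auto simp: simple_graph_def connected_graph_def has_cycle_def)
    have "{s} \<subseteq> N" "card {s} = Suc k" "({} :: 'a set set) \<subseteq> T" "card ({} :: 'a set set) = Suc k - 1"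
      using True s by auto
    then show ?thesis using t by (intro exI[of _ "{s}"] exI[of _ "{}"]) simp
  next
    case False
    have "1 \<le> k" "k \<le> card N" using False Suc.prems by auto
    then obtain S T' where IH: "S \<subseteq> N" "card S = k" "T' \<subseteq> T" "is_tree S T'" "card T' = k - 1"
      using Suc.IH by auto
    have "k < card N" using Suc.prems by simp
    from grow_step[OF fin con IH this] show ?thesis by simp
  qed
qed

lemma spanning:
  assumes fin: "finite N" and con: "connected_graph N T" and s: "s \<in> N"
  shows "\<exists>T'. T' \<subseteq> T \<and> is_tree N T' \<and> card T' = card N - 1"
proof -
  have "card N > 0" using fin s card_gt_0_iff by blast
  hence "1 \<le> card N" by simp
  then obtain S T' where S: "S \<subseteq> N" "card S = card N" "T' \<subseteq> T" "is_tree S T'" "card T' = card N - 1"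
    using grow[OF assms _ order_refl] by blast
  have "S = N" using card_subset_eq[OF fin S(1) S(2)] .
  thus ?thesis using S by blast
qed


lemma E_proper: "simple_graph V E \<Longrightarrow> {u,v} \<in> E \<Longrightarrow> u \<noteq> v \<and> u \<in> V \<and> v \<in> V"
  unfolding simple_graph_def by (metis doubleton_eq_iff)

lemma ext_edge_proper:
  assumes G: "simple_graph V E" and e: "e \<in> ext_edges V E \<Gamma>"
  shows "\<exists>u v. e = {u,v} \<and> u \<noteq> v"
  using e unfolding ext_edges_def
proof (elim UnE)
  assume "e \<in> {{x, y} | x y. x \<noteq> y \<and> (\<exists>u\<in>V. x \<in> insert (Nuc u) (Psi E \<Gamma> u) \<and> y \<in> insert (Nuc u) (Psi E \<Gamma> u))}"
  thus ?thesis by blast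
next
  assume "e \<in> {{Sat u i, Sat v j} | u v i j. {u, v} \<in> E \<and> i \<in> \<Gamma> v \<and> j \<in> \<Gamma> u}"
  then obtain u v i j where "e = {Sat u i, Sat v j}" "{u,v} \<in> E" by blast
  moreover have "u \<noteq> v" using E_proper[OF G calculation(2)] by blast
  ultimately show ?thesis by blast
next
  assume "e \<in> {{Sat u i, Nuc v} | u v i. {u, v} \<in> E \<and> i \<in> \<Gamma> v}"
  thus ?thesis by blast
next
  assume "e \<in> {{Nuc u, Sat v j} | u v j. {u, v} \<in> E \<and> j \<in> \<Gamma> u}"
  thus ?thesis by blast
qed

lemma Psi_mem: "Sat u i \<in> Psi E \<Gamma> m \<longleftrightarrow> u = m \<and> (\<exists>v. {m,v} \<in> E \<and> i \<in> \<Gamma> v)"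
  unfolding Psi_def nb_def by blast

lemma Nuc_Psi: "Nuc x \<notin> Psi E \<Gamma> m"
  unfolding Psi_def by blast

lemma near:
  assumes "{Nuc m, Sat u i} \<in> ext_edges V E \<Gamma>"
  shows "Sat u i \<in> Psi E \<Gamma> m \<or> ({u,m} \<in> E \<and> i \<in> \<Gamma> m)"
  using assms unfolding ext_edges_def
proof (elim UnE)
  assume "{Nuc m, Sat u i} \<in> {{x, y} | x y. x \<noteq> y \<and> (\<exists>u\<in>V. x \<in> insert (Nuc u) (Psi E \<Gamma> u) \<and> y \<in> insert (Nuc u) (Psi E \<Gamma> u))}"
  then obtain x y w where xy: "{Nuc m, Sat u i} = {x,y}" "x \<in> insert (Nuc w) (Psi E \<Gamma> w)" "y \<in> insert (Nuc w) (Psi E \<Gamma> w)"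
    by blast
  have "(x = Nuc m \<and> y = Sat u i) \<or> (x = Sat u i \<and> y = Nuc m)" using xy(1) by (metis doubleton_eq_iff)
  thus ?thesis using xy by (auto simp: Nuc_Psi)
next
  assume "{Nuc m, Sat u i} \<in> {{Sat u i, Sat v j} | u v i j. {u, v} \<in> E \<and> i \<in> \<Gamma> v \<and> j \<in> \<Gamma> u}"
  then obtain a b c d where "{Nuc m, Sat u i} = {Sat a b, Sat c d}" by blast
  thus ?thesis by (simp add: doubleton_eq_iff)
next
  assume "{Nuc m, Sat u i} \<in> {{Sat u i, Nuc v} | u v i. {u, v} \<in> E \<and> i \<in> \<Gamma> v}"
  then obtain a b c where "{Nuc m, Sat u i} = {Sat a b, Nuc c}" "{a,c} \<in> E" "b \<in> \<Gamma> c" by blast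
  thus ?thesis by (simp add: doubleton_eq_iff)
next
  assume "{Nuc m, Sat u i} \<in> {{Nuc u, Sat v j} | u v j. {u, v} \<in> E \<and> j \<in> \<Gamma> u}"
  then obtain a b c where "{Nuc m, Sat u i} = {Nuc a, Sat b c}" "{a,b} \<in> E" "c \<in> \<Gamma> a" by blast
  thus ?thesis by (simp add: doubleton_eq_iff insert_commute)
qed

lemma Psi_sat: "m \<in> V \<Longrightarrow> Psi E \<Gamma> m \<subseteq> sat_nodes V E \<Gamma>"
  unfolding sat_nodes_def by blast

lemma psi_edge:
  assumes "m \<in> V" "h1 \<in> Psi E \<Gamma> m" "h2 \<in> Psi E \<Gamma> m"
  shows "h1 = h2 \<or> {h1,h2} \<in> ext_edges V E \<Gamma>"
  using assms unfolding ext_edges_def by blast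

lemma hub:
  assumes G: "simple_graph V E" and Gam: "\<And>u. u \<in> V \<Longrightarrow> \<Gamma> u \<noteq> {}"
    and m: "m \<in> V" and e: "{Nuc m, Sat u i} \<in> ext_edges V E \<Gamma>"
  shows "\<exists>h\<in>Psi E \<Gamma> m. Sat u i = h \<or> {Sat u i, h} \<in> ext_edges V E \<Gamma>"
proof (cases "Sat u i \<in> Psi E \<Gamma> m")
  case True then show ?thesis by blast
next
  case False
  hence um: "{u,m} \<in> E" "i \<in> \<Gamma> m" using near[OF e] by auto
  have "u \<in> V" using G um unfolding simple_graph_def by (auto simp: doubleton_eq_iff)
  then obtain a where a: "a \<in> \<Gamma> u" using Gam by blast
  have "u \<in> nb E m" using um unfolding nb_def by (simp add: insert_commute)
  hence h: "Sat m a \<in> Psi E \<Gamma> m" using a unfolding Psi_def by blast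
  have "{Sat u i, Sat m a} \<in> ext_edges V E \<Gamma>" using um a unfolding ext_edges_def by blast
  then show ?thesis using h by blast
qed

lemma sat_fin:
  assumes G: "simple_graph V E" and Gam: "\<And>u. u \<in> V \<Longrightarrow> \<Gamma> u \<subseteq> {1..K}"
  shows "finite (sat_nodes V E \<Gamma>)"
proof -
  have fV: "finite V" using G unfolding simple_graph_def by blast
  have "\<And>u. u \<in> V \<Longrightarrow> Psi E \<Gamma> u \<subseteq> Sat u ` {1..K}"
  proof -
    fix u assume u: "u \<in> V"
    have "\<And>v. v \<in> nb E u \<Longrightarrow> v \<in> V" using G unfolding nb_def simple_graph_def
      by (auto simp: doubleton_eq_iff)
    thus "Psi E \<Gamma> u \<subseteq> Sat u ` {1..K}" unfolding Psi_def using Gam by blast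
  qed
  hence "\<And>u. u \<in> V \<Longrightarrow> finite (Psi E \<Gamma> u)" by (meson finite_atLeastAtMost finite_imageI finite_subset)
  thus ?thesis unfolding sat_nodes_def using fV by blast
qed

lemma card3: "card {a,b,c} \<le> 3"
  by (simp add: card_insert_if)


theorem mainTheorem6:
  fixes V :: "'v set" and E :: "'v set set" and \<Gamma> :: "'v \<Rightarrow> nat set" and K :: nat
    and M :: "'v set" and SBN :: "'v xnode set" and SBE :: "'v xnode set set"
    and C :: "'v xnode set"
  assumes G: "simple_graph V E" "connected_graph V E" "card V \<ge> 2"
    and K: "K > 0"
    and Gam: "\<And>u. u \<in> V \<Longrightarrow> \<Gamma> u \<noteq> {} \<and> \<Gamma> u \<subseteq> {1..K}"
    and M: "M \<subseteq> V"
    and SB: "min_satellite_bridge V E \<Gamma> M SBN SBE"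
    and C: "C \<subseteq> sat_nodes V E \<Gamma>"
    and Cadj: "\<And>c. c \<in> C \<Longrightarrow> \<exists>m\<in>M. {Nuc m, c} \<in> ext_edges V E \<Gamma>"
  shows "(\<exists>N T. sat_tree V E \<Gamma> N T \<and> SBN \<union> C \<subseteq> N \<and> card T \<le> card SBN + 3 * card C - 1)
       \<and> (\<forall>N T. min_steiner_tree V E \<Gamma> C N T \<longrightarrow> card T \<le> card SBN + 3 * card C - 1)"
  proof -
  let ?X = "ext_edges V E \<Gamma>"
  have sb: "is_tree SBN SBE" "SBN \<subseteq> sat_nodes V E \<Gamma>" "SBE \<subseteq> ?X"
    "\<forall>m\<in>M. \<exists>x\<in>SBN. {Nuc m, x} \<in> ?X"
    using SB unfolding min_satellite_bridge_def satellite_bridge_def ext_subtree_def by auto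
  have fsat: "finite (sat_nodes V E \<Gamma>)" using sat_fin[OF G(1)] Gam by blast
  have fC: "finite C" using C fsat finite_subset by blast
  have fSB: "finite SBN" using sb(2) fsat finite_subset by blast
  have satS: "\<And>y. y \<in> sat_nodes V E \<Gamma> \<Longrightarrow> \<exists>u i. y = Sat u i"
    unfolding sat_nodes_def Psi_def by blast
  have ex: "\<forall>c\<in>C. \<exists>t. fst t \<in> sat_nodes V E \<Gamma> \<and> fst (snd t) \<in> sat_nodes V E \<Gamma> \<and> snd (snd t) \<in> SBN \<and>
      (c = fst t \<or> {c, fst t} \<in> ?X) \<and> (fst t = fst (snd t) \<or> {fst t, fst (snd t)} \<in> ?X) \<and>
      (fst (snd t) = snd (snd t) \<or> {fst (snd t), snd (snd t)} \<in> ?X)"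
  proof
    fix c assume c: "c \<in> C"
    obtain m where m: "m \<in> M" "{Nuc m, c} \<in> ?X" using Cadj c by blast
    have mV: "m \<in> V" using m M by blast
    obtain x where x: "x \<in> SBN" "{Nuc m, x} \<in> ?X" using sb(4) m by blast
    obtain u i where cu: "c = Sat u i" using satS c C by blast
    obtain w j where xw: "x = Sat w j" using satS x sb(2) by blast
    have gam': "\<And>u. u \<in> V \<Longrightarrow> \<Gamma> u \<noteq> {}" using Gam by blast
    have ec: "{Nuc m, Sat u i} \<in> ?X" using m(2) cu by simp
    have ex: "{Nuc m, Sat w j} \<in> ?X" using x(2) xw by simp
    obtain h1 where h1: "h1 \<in> Psi E \<Gamma> m" "c = h1 \<or> {c, h1} \<in> ?X"
      using hub[OF G(1) gam' mV ec] cu by blast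
    obtain h2 where h2: "h2 \<in> Psi E \<Gamma> m" "x = h2 \<or> {x, h2} \<in> ?X"
      using hub[OF G(1) gam' mV ex] xw by blast
    have "h1 = h2 \<or> {h1,h2} \<in> ?X" using psi_edge[OF mV h1(1) h2(1)] .
    moreover have "h2 = x \<or> {h2, x} \<in> ?X" using h2 by (metis insert_commute)
    moreover have "h1 \<in> sat_nodes V E \<Gamma>" "h2 \<in> sat_nodes V E \<Gamma>" using Psi_sat[OF mV] h1 h2 by blast+
    ultimately show "\<exists>t. fst t \<in> sat_nodes V E \<Gamma> \<and> fst (snd t) \<in> sat_nodes V E \<Gamma> \<and> snd (snd t) \<in> SBN \<and>
      (c = fst t \<or> {c, fst t} \<in> ?X) \<and> (fst t = fst (snd t) \<or> {fst t, fst (snd t)} \<in> ?X) \<and>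
      (fst (snd t) = snd (snd t) \<or> {fst (snd t), snd (snd t)} \<in> ?X)"
      using h1 x by (intro exI[of _ "(h1, h2, x)"]) auto
  qed
  obtain f where f: "\<forall>c\<in>C. fst (f c) \<in> sat_nodes V E \<Gamma> \<and> fst (snd (f c)) \<in> sat_nodes V E \<Gamma> \<and> snd (snd (f c)) \<in> SBN \<and>
      (c = fst (f c) \<or> {c, fst (f c)} \<in> ?X) \<and> (fst (f c) = fst (snd (f c)) \<or> {fst (f c), fst (snd (f c))} \<in> ?X) \<and>
      (fst (snd (f c)) = snd (snd (f c)) \<or> {fst (snd (f c)), snd (snd (f c))} \<in> ?X)"
    using bchoice[OF ex] by (rule exE)
  define h1 where "h1 c = fst (f c)" for c
  define h2 where "h2 c = fst (snd (f c))" for c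
  define xx where "xx c = snd (snd (f c))" for c
  have F: "\<And>c. c \<in> C \<Longrightarrow> h1 c \<in> sat_nodes V E \<Gamma> \<and> h2 c \<in> sat_nodes V E \<Gamma> \<and> xx c \<in> SBN \<and>
      (c = h1 c \<or> {c, h1 c} \<in> ?X) \<and> (h1 c = h2 c \<or> {h1 c, h2 c} \<in> ?X) \<and>
      (h2 c = xx c \<or> {h2 c, xx c} \<in> ?X)"
  proof -
    fix c assume "c \<in> C"
    from f[rule_format, OF this] show "h1 c \<in> sat_nodes V E \<Gamma> \<and> h2 c \<in> sat_nodes V E \<Gamma> \<and> xx c \<in> SBN \<and>
      (c = h1 c \<or> {c, h1 c} \<in> ?X) \<and> (h1 c = h2 c \<or> {h1 c, h2 c} \<in> ?X) \<and>
      (h2 c = xx c \<or> {h2 c, xx c} \<in> ?X)" by (simp only: h1_def h2_def xx_def)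
  qed
  define N0 where "N0 = SBN \<union> (\<Union>c\<in>C. {c, h1 c, h2 c})"
  define T0 where "T0 = SBE \<union> (\<Union>c\<in>C. {{c, h1 c}, {h1 c, h2 c}, {h2 c, xx c}} \<inter> ?X)"
  have xxN: "\<And>c. c \<in> C \<Longrightarrow> xx c \<in> N0" using F unfolding N0_def by blast
  have pN: "\<And>c. c \<in> C \<Longrightarrow> c \<in> N0 \<and> h1 c \<in> N0 \<and> h2 c \<in> N0" unfolding N0_def by blast
  have fN0: "finite N0" unfolding N0_def using fSB fC by blast
  have N0sat: "N0 \<subseteq> sat_nodes V E \<Gamma>" unfolding N0_def using sb(2) C F by blast
  have T0X: "T0 \<subseteq> ?X" unfolding T0_def using sb(3) by blast
  have sgSB: "simple_graph SBN SBE" using sb(1) by (rule tree_D)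
  let ?R = "adj_rel T0 \<inter> N0 \<times> N0"
  have step: "\<And>a b. a \<in> N0 \<Longrightarrow> b \<in> N0 \<Longrightarrow> a = b \<or> {a,b} \<in> T0 \<Longrightarrow> (a,b) \<in> ?R\<^sup>* \<and> (b,a) \<in> ?R\<^sup>*"
  proof -
    fix a b assume a: "a \<in> N0" "b \<in> N0" "a = b \<or> {a,b} \<in> T0"
    show "(a,b) \<in> ?R\<^sup>* \<and> (b,a) \<in> ?R\<^sup>*"
    proof (cases "a = b")
      case True then show ?thesis by simp
    next
      case False
      hence "(a,b) \<in> ?R" "(b,a) \<in> ?R" using a unfolding adj_rel_def by (auto simp: insert_commute)
      then show ?thesis by blast
    qed
  qed
  have SBc: "\<And>s t. s \<in> SBN \<Longrightarrow> t \<in> SBN \<Longrightarrow> (s,t) \<in> ?R\<^sup>*"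
  proof -
    fix s t assume "s \<in> SBN" "t \<in> SBN"
    hence "(s,t) \<in> (adj_rel SBE \<inter> SBN \<times> SBN)\<^sup>*" using tree_D(3)[OF sb(1)] unfolding connected_graph_def by blast
    moreover have "adj_rel SBE \<inter> SBN \<times> SBN \<subseteq> ?R" unfolding adj_rel_def T0_def N0_def by blast
    ultimately show "(s,t) \<in> ?R\<^sup>*" using rtrancl_mono by blast
  qed
  have reach: "\<And>y. y \<in> N0 \<Longrightarrow> \<exists>s\<in>SBN. (y,s) \<in> ?R\<^sup>* \<and> (s,y) \<in> ?R\<^sup>*"
  proof -
    fix y assume y: "y \<in> N0"
    show "\<exists>s\<in>SBN. (y,s) \<in> ?R\<^sup>* \<and> (s,y) \<in> ?R\<^sup>*"
    proof (cases "y \<in> SBN")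
      case True then show ?thesis by blast
    next
      case False
      then obtain c where c: "c \<in> C" "y \<in> {c, h1 c, h2 c}" using y unfolding N0_def by blast
      have e1: "c = h1 c \<or> {c, h1 c} \<in> T0" using F[OF c(1)] unfolding T0_def using c(1) by blast
      have e2: "h1 c = h2 c \<or> {h1 c, h2 c} \<in> T0" using F[OF c(1)] unfolding T0_def using c(1) by blast
      have e3: "h2 c = xx c \<or> {h2 c, xx c} \<in> T0" using F[OF c(1)] unfolding T0_def using c(1) by blast
      have s1: "(c, h1 c) \<in> ?R\<^sup>* \<and> (h1 c, c) \<in> ?R\<^sup>*" using step pN[OF c(1)] e1 by blast
      have s2: "(h1 c, h2 c) \<in> ?R\<^sup>* \<and> (h2 c, h1 c) \<in> ?R\<^sup>*" using step pN[OF c(1)] e2 by blast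
      have s3: "(h2 c, xx c) \<in> ?R\<^sup>* \<and> (xx c, h2 c) \<in> ?R\<^sup>*" using step pN[OF c(1)] xxN[OF c(1)] e3 by blast
      have r2: "(h2 c, xx c) \<in> ?R\<^sup>* \<and> (xx c, h2 c) \<in> ?R\<^sup>*" using s3 .
      have r1: "(h1 c, xx c) \<in> ?R\<^sup>* \<and> (xx c, h1 c) \<in> ?R\<^sup>*"
        using rtrancl_trans[of "h1 c" "h2 c" ?R "xx c"] rtrancl_trans[of "xx c" "h2 c" ?R "h1 c"] s2 r2 by blast
      have r0: "(c, xx c) \<in> ?R\<^sup>* \<and> (xx c, c) \<in> ?R\<^sup>*"
        using rtrancl_trans[of c "h1 c" ?R "xx c"] rtrancl_trans[of "xx c" "h1 c" ?R c] s1 r1 by blast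
      have "y = c \<or> y = h1 c \<or> y = h2 c" using c(2) by simp
      hence "(y, xx c) \<in> ?R\<^sup>* \<and> (xx c, y) \<in> ?R\<^sup>*" using r0 r1 r2 by (elim disjE) simp_all
      then show ?thesis using F[OF c(1)] by blast
    qed
  qed
  have con: "connected_graph N0 T0" unfolding connected_graph_def
  proof (intro ballI)
    fix y z assume "y \<in> N0" "z \<in> N0"
    then obtain s t where st: "s \<in> SBN" "t \<in> SBN" "(y,s) \<in> ?R\<^sup>*" "(t,z) \<in> ?R\<^sup>*" using reach by blast
    have "(s,t) \<in> ?R\<^sup>*" using SBc st(1,2) .
    hence "(y,t) \<in> ?R\<^sup>*" using st(3) by (rule rtrancl_trans[rotated])
    thus "(y,z) \<in> ?R\<^sup>*" using st(4) by (rule rtrancl_trans)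
  qed
  obtain s where s: "s \<in> SBN" using tree_D(1)[OF sb(1)] by blast
  hence sN: "s \<in> N0" unfolding N0_def by blast
  obtain T' where T': "T' \<subseteq> T0" "is_tree N0 T'" "card T' = card N0 - 1"
    using spanning[OF fN0 con sN] by blast
  have st: "sat_tree V E \<Gamma> N0 T'" unfolding sat_tree_def using T' N0sat T0X by blast
  have sub: "SBN \<union> C \<subseteq> N0" unfolding N0_def by blast
  have "card N0 \<le> card SBN + card (\<Union>c\<in>C. {c, h1 c, h2 c})" unfolding N0_def by (rule card_Un_le)
  also have "card (\<Union>c\<in>C. {c, h1 c, h2 c}) \<le> (\<Sum>c\<in>C. card {c, h1 c, h2 c})" using fC by (rule card_UN_le)
  also have "(\<Sum>c\<in>C. card {c, h1 c, h2 c}) \<le> (\<Sum>c\<in>C. 3)" by (rule sum_mono) (rule card3)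
  finally have cN: "card N0 \<le> card SBN + 3 * card C" by simp
  have bound: "card T' \<le> card SBN + 3 * card C - 1" using T'(3) cN by simp
  have "\<forall>N T. min_steiner_tree V E \<Gamma> C N T \<longrightarrow> card T \<le> card SBN + 3 * card C - 1"
  proof (intro allI impI)
    fix N T assume "min_steiner_tree V E \<Gamma> C N T"
    hence "\<forall>N' T'. sat_tree V E \<Gamma> N' T' \<and> C \<subseteq> N' \<longrightarrow> card T \<le> card T'"
      unfolding min_steiner_tree_def by (elim conjE)
    hence "card T \<le> card T'" using st sub by blast
    thus "card T \<le> card SBN + 3 * card C - 1" using bound by simp
  qed
  moreover have "\<exists>N T. sat_tree V E \<Gamma> N T \<and> SBN \<union> C \<subseteq> N \<and> card T \<le> card SBN + 3 * card C - 1"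
    using st sub bound by (intro exI[of _ N0] exI[of _ T']) simp
  ultimately show ?thesis by (intro conjI)
qed

end
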